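(* Let $k\ge 1$ and let $P(n)=\sum_{i=0}^k\alpha_i n^i$ be a polynomial of degree $k$ with real coefficients. Let $q,R,h$ be positive integers and $p$ an integer such that \[\gcd(p,q)=1,\qquad \Bigl|\alpha_k-\frac pq\Bigr|\le\frac1{q^2},\qquad 2h\,k!\,R^{2-1/2^{k-2}}\le q.\] Then for every integer $N\ge R$, \[\frac1N\Bigl|\sum_{1\le n\le N}e(hP(n))\Bigr|\le C_k\Bigl(\frac1R+\frac qN\Bigr)^{1/2^{k-1}},\] where $C_k$ is a constant depending only on $k$.
   Context: $e(u)=\exp(2\pi i u)$ for real $u$. *)

theory Defs
  imports "HOL-Analysis.Analysis" "HOL-Computational_Algebra.Polynomial"
begin

definition e :: "real \<Rightarrow> complex" where
  "e u = exp (2 * complex_of_real pi * \<i> * complex_of_real u)"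

end

theory Submission
  imports Defs
begin

lemma e_cis: "e u = cis (2 * pi * u)"
  unfolding e_def cis_conv_exp by (simp add: mult.commute mult.left_commute)

lemma e_add: "e (u + v) = e u * e v"
  by (simp add: e_cis cis_mult distrib_left)

lemma norm_e [simp]: "norm (e u) = 1"
  by (simp add: e_cis)

lemma e_cnj: "cnj (e u) = e (- u)"
  by (simp add: e_cis cis_cnj)

lemma e_mult_cnj: "e u * cnj (e v) = e (u - v)"
  by (simp add: e_cnj e_add[symmetric])

lemma e_int: "e (of_int t) = 1"
  by (simp add: e_cis)

lemma e_pow: "e u ^ n = e (real n * u)"
proof -
  have "e u ^ n = cis (real n * (2 * pi * u))" by (simp only: e_cis Complex.DeMoivre)
  also have "\<dots> = e (real n * u)" by (simp add: e_cis ac_simps)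
  finally show ?thesis .
qed

definition Low :: "nat \<Rightarrow> (real \<Rightarrow> real) \<Rightarrow> bool" where
  "Low k f \<longleftrightarrow> (\<exists>c. \<forall>x. f x = (\<Sum>j<k. c j * x ^ j))"

definition LP :: "nat \<Rightarrow> real \<Rightarrow> (real \<Rightarrow> real) \<Rightarrow> bool" where
  "LP k b f \<longleftrightarrow> Low k (\<lambda>x. f x - b * x ^ k)"

lemma Low_zero: "Low k (\<lambda>x. 0)"
  unfolding Low_def by (rule exI[of _ "\<lambda>_. 0"]) simp

lemma Low_add: "Low k f \<Longrightarrow> Low k g \<Longrightarrow> Low k (\<lambda>x. f x + g x)"
  unfolding Low_def
  apply (elim exE)
  subgoal for c d by (rule exI[of _ "\<lambda>j. c j + d j"]) (simp add: distrib_right sum.distrib)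
  done

lemma Low_scale: "Low k f \<Longrightarrow> Low k (\<lambda>x. a * f x)"
  unfolding Low_def
  apply (elim exE)
  subgoal for c by (rule exI[of _ "\<lambda>j. a * c j"]) (simp add: sum_distrib_left mult.assoc)
  done

lemma Low_diff: "Low k f \<Longrightarrow> Low k g \<Longrightarrow> Low k (\<lambda>x. f x - g x)"
  using Low_add[of k f "\<lambda>x. (-1) * g x"] Low_scale[of k g "-1"] by simp

lemma Low_mono: "Low j f \<Longrightarrow> j \<le> k \<Longrightarrow> Low k f"
  unfolding Low_def
  apply (elim exE)
  subgoal for c
    apply (rule exI[of _ "\<lambda>i. if i < j then c i else 0"])
    apply (intro allI)
    apply (subst sum.mono_neutral_cong_right[of "{..<k}" "{..<j}"])
    by auto
  done

lemma Low_sum: "finite A \<Longrightarrow> (\<And>i. i \<in> A \<Longrightarrow> Low k (f i)) \<Longrightarrow> Low k (\<lambda>x. \<Sum>i\<in>A. f i x)"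
  by (induction A rule: finite_induct) (auto intro: Low_zero Low_add)

lemma Low_xmult: "Low k f \<Longrightarrow> Low (Suc k) (\<lambda>x. x * f x)"
  unfolding Low_def
  apply (elim exE)
  subgoal for c
    apply (rule exI[of _ "\<lambda>j. if j = 0 then 0 else c (j - 1)"])
    apply (intro allI)
    apply (subst sum.lessThan_Suc_shift)
    by (simp add: sum_distrib_left mult.commute mult.left_commute)
  done

lemma Low_const: "Low (Suc k) (\<lambda>x. a)"
  unfolding Low_def
  apply (rule exI[of _ "\<lambda>j. if j = 0 then a else 0"])
  apply (intro allI)
  apply (subst sum.lessThan_Suc_shift)
  by simp

lemma Low_shift_pow: "Low (Suc j) (\<lambda>x. (x + a) ^ j)"
proof (induction j)
  case 0 then show ?case using Low_const[of 0 1] by simp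
next
  case (Suc j)
  have "Low (Suc (Suc j)) (\<lambda>x. x * (x + a) ^ j + a * (x + a) ^ j)"
    by (intro Low_add Low_xmult Low_scale Suc Low_mono[OF Suc]) auto
  then show ?case by (simp add: algebra_simps)
qed

lemma Low_powdiff: "Low j (\<lambda>x. (x + a) ^ j - x ^ j)"
proof (induction j)
  case 0 then show ?case using Low_zero by simp
next
  case (Suc j)
  have "Low (Suc j) (\<lambda>x. x * ((x + a) ^ j - x ^ j) + a * (x + a) ^ j)"
    by (intro Low_add Low_xmult Low_scale Suc Low_shift_pow)
  then show ?case by (simp add: algebra_simps)
qed

lemma Low_key0: "Low i (\<lambda>x. (x + a) ^ Suc i - (x + b) ^ Suc i - real (Suc i) * (a - b) * x ^ i)"
proof (induction i)
  case 0 then show ?case using Low_zero[of 0] by simp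
next
  case (Suc i)
  have "Low (Suc i) (\<lambda>x. x * ((x + a) ^ Suc i - (x + b) ^ Suc i - real (Suc i) * (a - b) * x ^ i)
        + (a * ((x + a) ^ Suc i - x ^ Suc i) - b * ((x + b) ^ Suc i - x ^ Suc i)))"
    by (intro Low_add Low_xmult Low_diff Low_scale Suc Low_powdiff)
  then show ?case by (simp add: algebra_simps)
qed

lemma Low_shiftdiff:
  assumes "Low k g" shows "Low (k - 1) (\<lambda>x. g (x + a) - g (x + b))"
proof -
  obtain c where c: "\<And>x. g x = (\<Sum>j<k. c j * x ^ j)" using assms unfolding Low_def by blast
  have "Low (k - 1) (\<lambda>x. \<Sum>j<k. c j * (((x + a) ^ j - x ^ j) - ((x + b) ^ j - x ^ j)))"
  proof (intro Low_sum Low_scale)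
    fix j assume "j \<in> {..<k}"
    then have "j \<le> k - 1" by auto
    then show "Low (k - 1) (\<lambda>x. (x + a) ^ j - x ^ j - ((x + b) ^ j - x ^ j))"
      by (intro Low_mono[OF Low_diff[OF Low_powdiff Low_powdiff]])
  qed auto
  then show ?thesis by (simp add: c algebra_simps sum_subtractf[symmetric])
qed

lemma LP_diff:
  assumes "LP (Suc i) b f"
  shows "LP i (real (Suc i) * b * (u - v)) (\<lambda>x. f (x + u) - f (x + v))"
proof -
  let ?g = "\<lambda>x. f x - b * x ^ Suc i"
  have g: "Low (Suc i) ?g" using assms unfolding LP_def .
  have "Low i (\<lambda>x. b * ((x + u) ^ Suc i - (x + v) ^ Suc i - real (Suc i) * (u - v) * x ^ i)
     + (?g (x + u) - ?g (x + v)))"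
    using Low_add[OF Low_scale[OF Low_key0] Low_shiftdiff[OF g]] by simp
  then show ?thesis unfolding LP_def by (simp add: algebra_simps)
qed

lemma LP_one: "LP (Suc 0) b f \<Longrightarrow> \<exists>c. \<forall>x. f x = b * x + c"
  unfolding LP_def Low_def by (auto simp: algebra_simps)


definition SS :: "(real \<Rightarrow> real) \<Rightarrow> nat \<Rightarrow> complex" where
  "SS f N = (\<Sum>n\<in>{1..N}. e (f (real n)))"

lemma SS_le: "norm (SS f N) \<le> real N"
proof -
  have "norm (SS f N) \<le> (\<Sum>n\<in>{1..N}. norm (e (f (real n))))"
    unfolding SS_def by (rule norm_sum)
  then show ?thesis by simp
qed

lemma shift_bound:
  "norm (SS f N - (\<Sum>n\<in>{1..N}. e (f (real (n + a))))) \<le> 2 * real a"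
proof (induction a)
  case 0 then show ?case by (simp add: SS_def)
next
  case (Suc a)
  let ?z = "\<lambda>i. e (f (real (i + a)))"
  have "(\<Sum>n\<in>{1..N}. ?z (Suc n) - ?z n) = ?z (Suc N) - ?z 1"
    by (rule sum_Suc_diff) simp
  then have eq: "(\<Sum>n\<in>{1..N}. e (f (real (n + Suc a)))) = (\<Sum>n\<in>{1..N}. ?z n) + (?z (Suc N) - ?z 1)"
    by (simp add: sum_subtractf algebra_simps)
  have "norm (?z (Suc N) - ?z 1) \<le> 2"
    using norm_triangle_ineq4[of "?z (Suc N)" "?z 1"] by simp
  moreover have eq2: "SS f N - (\<Sum>n\<in>{1..N}. e (f (real (n + Suc a)))) =
     (SS f N - (\<Sum>n\<in>{1..N}. ?z n)) - (?z (Suc N) - ?z 1)"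
    by (simp only: eq) (simp add: algebra_simps)
  have "norm (SS f N - (\<Sum>n\<in>{1..N}. e (f (real (n + Suc a))))) \<le>
     norm (SS f N - (\<Sum>n\<in>{1..N}. ?z n)) + norm (?z (Suc N) - ?z 1)"
    unfolding eq2 by (rule norm_triangle_ineq4)
  ultimately show ?case using Suc.IH by simp
qed


lemma vdc:
  assumes N: "N \<ge> 1" and H: "H \<ge> 1"
  shows "norm (SS f N) / real N \<le> 2 * real H / real N +
    sqrt ((\<Sum>a<H. \<Sum>b<H. norm (SS (\<lambda>x. f (x + real a) - f (x + real b)) N)) / (real H ^ 2 * real N))"
proof -
  define z where "z i = e (f (real i))" for i
  define w where "w n = (\<Sum>a<H. z (n + a))" for n
  define U where "U a b = SS (\<lambda>x. f (x + real a) - f (x + real b)) N" for a b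
  define V where "V = (\<Sum>a<H. \<Sum>b<H. norm (U a b))"
  have sw: "(\<Sum>n\<in>{1..N}. w n) = (\<Sum>a<H. \<Sum>n\<in>{1..N}. z (n + a))"
    unfolding w_def by (rule sum.swap)
  have "of_nat H * SS f N - (\<Sum>n\<in>{1..N}. w n) = (\<Sum>a<H. SS f N - (\<Sum>n\<in>{1..N}. z (n + a)))"
    unfolding sw by (simp add: sum_subtractf)
  then have "norm (of_nat H * SS f N - (\<Sum>n\<in>{1..N}. w n)) \<le> (\<Sum>a<H. norm (SS f N - (\<Sum>n\<in>{1..N}. z (n + a))))"
    by (simp add: norm_sum)
  also have "\<dots> \<le> (\<Sum>a<H. 2 * real H)"
  proof (rule sum_mono)
    fix a assume "a \<in> {..<H}"
    then show "norm (SS f N - (\<Sum>n\<in>{1..N}. z (n + a))) \<le> 2 * real H"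
      using shift_bound[of f N a] unfolding z_def by simp
  qed
  finally have h1: "norm (of_nat H * SS f N - (\<Sum>n\<in>{1..N}. w n)) \<le> 2 * real H ^ 2"
    by (simp add: power2_eq_square)
  have h1': "real H * norm (SS f N) \<le> norm (\<Sum>n\<in>{1..N}. w n) + 2 * real H ^ 2"
    using h1 norm_triangle_ineq2[of "of_nat H * SS f N" "\<Sum>n\<in>{1..N}. w n"]
    by (simp add: norm_mult)
  have wsq: "(norm (w n))\<^sup>2 = (\<Sum>a<H. \<Sum>b<H. Re (e (f (real (n + a)) - f (real (n + b)))))" for n
  proof -
    have "complex_of_real ((norm (w n))\<^sup>2) = w n * cnj (w n)" by (rule complex_norm_square)
    also have "\<dots> = (\<Sum>a<H. \<Sum>b<H. z (n + a) * cnj (z (n + b)))"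
      unfolding w_def cnj_sum by (rule sum_product)
    also have "\<dots> = (\<Sum>a<H. \<Sum>b<H. e (f (real (n + a)) - f (real (n + b))))"
      unfolding z_def e_mult_cnj ..
    finally have X: "complex_of_real ((norm (w n))\<^sup>2) = (\<Sum>a<H. \<Sum>b<H. e (f (real (n + a)) - f (real (n + b))))" .
    show ?thesis using arg_cong[OF X, of Re] by (simp only: Re_complex_of_real Re_sum)
  qed
  have h3: "(\<Sum>n\<in>{1..N}. (norm (w n))\<^sup>2) \<le> V"
  proof -
    have "(\<Sum>n\<in>{1..N}. (norm (w n))\<^sup>2) = (\<Sum>a<H. \<Sum>b<H. Re (U a b))"
    proof -
      let ?g = "\<lambda>n a b. Re (e (f (real n + real a) - f (real n + real b)))"
      have "(\<Sum>n\<in>{1..N}. (norm (w n))\<^sup>2) = (\<Sum>n\<in>{1..N}. \<Sum>a<H. \<Sum>b<H. ?g n a b)"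
        unfolding wsq by simp
      also have "\<dots> = (\<Sum>a<H. \<Sum>n\<in>{1..N}. \<Sum>b<H. ?g n a b)"
        by (rule sum.swap)
      also have "\<dots> = (\<Sum>a<H. \<Sum>b<H. \<Sum>n\<in>{1..N}. ?g n a b)"
        by (rule sum.cong[OF refl]) (rule sum.swap)
      finally show ?thesis unfolding U_def SS_def Re_sum by simp
    qed
    also have "\<dots> \<le> V" unfolding V_def
      by (intro sum_mono complex_Re_le_cmod)
    finally show ?thesis .
  qed
  have "(\<Sum>n\<in>{1..N}. norm (w n))\<^sup>2 \<le> (\<Sum>n\<in>{1..N}. (norm (w n))\<^sup>2) * real N"
    using sum_squared_le_sum_of_squares[of "\<lambda>n. norm (w n)" "{1..N}"] by simp
  also have "\<dots> \<le> V * real N" using h3 by (simp add: mult_right_mono)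
  finally have "(\<Sum>n\<in>{1..N}. norm (w n)) \<le> sqrt (V * real N)"
    by (simp add: real_le_rsqrt)
  then have h2: "norm (\<Sum>n\<in>{1..N}. w n) \<le> sqrt (V * real N)"
    using norm_sum[of w "{1..N}"] by linarith
  have V0: "V \<ge> 0" unfolding V_def by (intro sum_nonneg) auto
  have "real H * norm (SS f N) \<le> sqrt (V * real N) + 2 * real H ^ 2" using h1' h2 by linarith
  then have "norm (SS f N) \<le> (sqrt (V * real N) + 2 * real H ^ 2) / real H"
    using H by (simp add: pos_le_divide_eq mult.commute)
  also have "(sqrt (V * real N) + 2 * real H ^ 2) / real H = sqrt (V * real N) / real H + 2 * real H"
    using H by (simp add: add_divide_distrib power2_eq_square)
  finally have "norm (SS f N) / real N \<le> (sqrt (V * real N) / real H + 2 * real H) / real N"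
    using N by (simp add: divide_right_mono)
  also have "\<dots> = sqrt (V * real N) / (real H * real N) + 2 * real H / real N"
    by (simp add: add_divide_distrib)
  finally have "norm (SS f N) / real N \<le> sqrt (V * real N) / (real H * real N) + 2 * real H / real N" .
  also have "sqrt (V * real N) / (real H * real N) = sqrt (V / (real H ^ 2 * real N))"
  proof -
    have "sqrt (V / (real H ^ 2 * real N)) = sqrt ((V * real N) / (real H * real N)^2)"
      using N by (simp add: power2_eq_square)
    also have "\<dots> = sqrt (V * real N) / (real H * real N)"
      by (simp add: real_sqrt_divide)
    finally show ?thesis by simp
  qed
  finally show ?thesis unfolding V_def U_def by simp
qed


definition Good :: "nat \<Rightarrow> real \<Rightarrow> real \<Rightarrow> real \<Rightarrow> bool" where
  "Good N Q b M \<longleftrightarrow> (\<forall>m::int. 0 < \<bar>m\<bar> \<and> real_of_int \<bar>m\<bar> \<le> M \<longrightarrow>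
      (\<forall>c. norm (SS (\<lambda>t. real_of_int m * b * t + c) N) \<le> Q))"

definition Mk :: "(nat \<Rightarrow> nat) \<Rightarrow> nat \<Rightarrow> real" where
  "Mk G j = fact j * (\<Prod>i\<in>{2..j}. real (G i))"

fun Dc :: "real \<Rightarrow> nat \<Rightarrow> real" where
  "Dc d 0 = d"
| "Dc d (Suc 0) = d"
| "Dc d (Suc (Suc j)) = 2 + sqrt (2 + Dc d (Suc j))"

lemma Dc_nonneg: "d \<ge> 0 \<Longrightarrow> Dc d j \<ge> 0"
  by (induction d j rule: Dc.induct) auto

lemma Mk_Suc: "j \<ge> 1 \<Longrightarrow> Mk G (Suc j) = real (Suc j) * real (G (Suc j)) * Mk G j"
proof -
  assume j: "j \<ge> 1"
  have "{2..Suc j} = insert (Suc j) {2..j}" using j by auto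
  then have "(\<Prod>i\<in>{2..Suc j}. real (G i)) = real (G (Suc j)) * (\<Prod>i\<in>{2..j}. real (G i))"
    by simp
  then show ?thesis unfolding Mk_def by (simp add: algebra_simps)
qed

lemma Mk_nonneg: "Mk G j \<ge> 0"
  unfolding Mk_def by (intro mult_nonneg_nonneg prod_nonneg) auto

lemma Good_step:
  assumes g: "Good N Q b (Mk G (Suc j))" and j: "j \<ge> 1"
    and ab: "a \<noteq> a'" "a < G (Suc j)" "a' < G (Suc j)"
  shows "Good N Q (real (Suc j) * b * (real a - real a')) (Mk G j)"
  unfolding Good_def
proof (intro allI impI)
  fix m :: int and c
  assume m: "0 < \<bar>m\<bar> \<and> real_of_int \<bar>m\<bar> \<le> Mk G j"
  define m' where "m' = m * int (Suc j) * (int a - int a')"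
  have d0: "0 < \<bar>int a - int a'\<bar>" using ab by auto
  have d1: "real_of_int \<bar>int a - int a'\<bar> \<le> real (G (Suc j))" using ab by auto
  have "0 < \<bar>m'\<bar>" unfolding m'_def using m d0 by (simp add: abs_mult)
  moreover have "real_of_int \<bar>m'\<bar> \<le> Mk G (Suc j)"
  proof -
    have "real_of_int \<bar>m'\<bar> = real_of_int \<bar>m\<bar> * real (Suc j) * real_of_int \<bar>int a - int a'\<bar>"
      unfolding m'_def by (simp add: abs_mult)
    also have "\<dots> \<le> Mk G j * real (Suc j) * real (G (Suc j))"
      using m d1 by (intro mult_mono) auto
    finally show ?thesis using Mk_Suc[OF j, of G] by (simp add: algebra_simps)
  qed
  ultimately have "norm (SS (\<lambda>t. real_of_int m' * b * t + c) N) \<le> Q"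
    using g unfolding Good_def by blast
  moreover have "real_of_int m' * b = real_of_int m * (real (Suc j) * b * (real a - real a'))"
    unfolding m'_def by simp
  ultimately show "norm (SS (\<lambda>t. real_of_int m * (real (Suc j) * b * (real a - real a')) * t + c) N) \<le> Q"
    by simp
qed


lemma SS_zero: "SS (\<lambda>t. 0) N = of_nat N"
  unfolding SS_def by (simp add: e_cis)

lemma W:
  assumes N: "N \<ge> 1" and x: "0 < x" "x \<le> 1" and d: "d \<ge> 0" and Q: "Q / real N \<le> d * x"
    and G1: "\<And>i. 2 \<le> i \<Longrightarrow> G i \<ge> 1"
    and GN: "\<And>i. 2 \<le> i \<Longrightarrow> i \<le> k \<Longrightarrow> real (G i) \<le> x * real N"
    and Gx: "\<And>i. 2 \<le> i \<Longrightarrow> 1 / real (G i) \<le> 2 * x powr (1 / 2 ^ (i - 2))"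
  shows "1 \<le> j \<Longrightarrow> j \<le> k \<Longrightarrow> LP j b f \<Longrightarrow> Good N Q b (Mk G j) \<Longrightarrow>
     norm (SS f N) / real N \<le> Dc d j * x powr (1 / 2 ^ (j - 1))"
proof (induction j arbitrary: b f rule: nat_induct_at_least)
  case base
  have "LP (Suc 0) b f" using base.prems(2) by simp
  then obtain c where c: "\<And>t. f t = b * t + c" using LP_one by blast
  have "Mk G 1 = 1" unfolding Mk_def by simp
  then have "0 < \<bar>1::int\<bar> \<and> real_of_int \<bar>1::int\<bar> \<le> Mk G 1" by simp
  then have "norm (SS (\<lambda>t. real_of_int 1 * b * t + c) N) \<le> Q"
    using base.prems(3) unfolding Good_def by blast
  moreover have "f = (\<lambda>t. b * t + c)" using c by auto
  ultimately have "norm (SS f N) \<le> Q" by simp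
  then have "norm (SS f N) / real N \<le> Q / real N" using N by (simp add: divide_right_mono)
  then show ?case using Q x by (simp add: powr_one)
next
  case (Suc j)
  define H where "H = G (Suc j)"
  have H1: "H \<ge> 1" using G1[of "Suc j"] Suc.hyps unfolding H_def by auto
  define y where "y = x powr (1 / 2 ^ (j - 1))"
  define B where "B = Dc d j * y"
  have y0: "y \<ge> 0" unfolding y_def by simp
  have B0: "B \<ge> 0" unfolding B_def using Dc_nonneg[OF d] y0 by simp
  let ?U = "\<lambda>a b'. norm (SS (\<lambda>t. f (t + real a) - f (t + real b')) N)"
  have Ub: "?U a a' \<le> (if a = a' then real N else 0) + B * real N" if "a < H" "a' < H" for a a'
  proof (cases "a = a'")
    case True
    then show ?thesis using SS_zero[of N] B0 N by simp
  next
    case False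
    have lp: "LP j (real (Suc j) * b * (real a - real a')) (\<lambda>t. f (t + real a) - f (t + real a'))"
      using LP_diff[OF Suc.prems(2)] by simp
    have gd: "Good N Q (real (Suc j) * b * (real a - real a')) (Mk G j)"
      using Good_step[OF Suc.prems(3) Suc.hyps False] that unfolding H_def by auto
    have "?U a a' / real N \<le> B"
      using Suc.IH[OF _ lp gd] Suc.prems(1) unfolding B_def y_def by simp
    then show ?thesis using False N by (simp add: divide_le_eq mult.commute)
  qed
  have "(\<Sum>a<H. \<Sum>a'<H. ?U a a') \<le> (\<Sum>a<H. \<Sum>a'<H. (if a = a' then real N else 0) + B * real N)"
    using Ub by (intro sum_mono) auto
  also have "\<dots> = real H * real N + real H ^ 2 * B * real N"
    by (simp add: sum.distrib power2_eq_square algebra_simps)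
  finally have "(\<Sum>a<H. \<Sum>a'<H. ?U a a') / (real H ^ 2 * real N) \<le>
      (real H * real N + real H ^ 2 * B * real N) / (real H ^ 2 * real N)"
    by (rule divide_right_mono) simp
  also have "\<dots> = 1 / real H + B"
    using H1 N by (simp add: add_divide_distrib power2_eq_square)
  finally have sU: "(\<Sum>a<H. \<Sum>a'<H. ?U a a') / (real H ^ 2 * real N) \<le> 1 / real H + B" .
  have "1 / real H \<le> 2 * y"
    using Gx[of "Suc j"] Suc.hyps unfolding H_def y_def by (simp add: numeral_2_eq_2)
  then have "(\<Sum>a<H. \<Sum>a'<H. ?U a a') / (real H ^ 2 * real N) \<le> (2 + Dc d j) * y"
    using sU unfolding B_def by (simp add: algebra_simps)
  then have "sqrt ((\<Sum>a<H. \<Sum>a'<H. ?U a a') / (real H ^ 2 * real N)) \<le> sqrt ((2 + Dc d j) * y)"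
    by (rule real_sqrt_le_mono)
  then have s2: "sqrt ((\<Sum>a<H. \<Sum>a'<H. ?U a a') / (real H ^ 2 * real N)) \<le> sqrt (2 + Dc d j) * sqrt y"
    by (simp only: real_sqrt_mult)
  obtain j' where j': "j = Suc j'" using Suc.hyps by (cases j) auto
  define z where "z = x powr (1 / 2 ^ (Suc j - 1))"
  have sy: "sqrt y = z"
  proof -
    have "z = x powr ((1 / 2 ^ (j - 1)) / 2)" unfolding z_def using j' by (simp add: mult.commute)
    also have "\<dots> = sqrt y" unfolding y_def using x powr_half_sqrt_powr[of x "1 / 2 ^ (j - 1)"] by simp
    finally show ?thesis by simp
  qed
  have h2: "2 * real H / real N \<le> 2 * z"
  proof -
    have "real H \<le> x * real N" using GN[of "Suc j"] Suc.hyps Suc.prems(1) unfolding H_def by auto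
    then have a1: "2 * real H / real N \<le> 2 * x" using N by (simp add: divide_le_eq mult.commute)
    have "x powr 1 \<le> z" unfolding z_def
      using x by (intro powr_mono') auto
    then have "x \<le> z" using x by (simp add: powr_one)
    then show ?thesis using a1 by linarith
  qed
  have main: "norm (SS f N) / real N \<le> 2 * real H / real N +
    sqrt ((\<Sum>a<H. \<Sum>a'<H. ?U a a') / (real H ^ 2 * real N))"
    using vdc[OF N H1, of f] by simp
  have "Dc d (Suc j) = 2 + sqrt (2 + Dc d j)" using j' by simp
  then have "Dc d (Suc j) * z = 2 * z + sqrt (2 + Dc d j) * z" by (simp add: algebra_simps)
  then show ?case using main h2 s2[unfolded sy] unfolding z_def[symmetric] by linarith
qed


lemma sin_lower:
  fixes y :: real assumes "0 \<le> y" "y \<le> 2" shows "sin y \<ge> y / 3"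
proof -
  have "(\<Sum>m<3. sin_coeff m * y ^ m) = y"
    by (simp add: numeral_3_eq_3 sin_coeff_def)
  then have b: "\<bar>sin y - y\<bar> \<le> inverse (fact 3) * \<bar>y\<bar> ^ 3"
    using Maclaurin_sin_bound[of y 3] by simp
  have "y ^ 3 = y * y\<^sup>2" by (simp add: power2_eq_square power3_eq_cube)
  also have "\<dots> \<le> y * 4"
    using assms mult_mono[of y 2 y 2] by (intro mult_left_mono) (auto simp: power2_eq_square)
  finally have "y ^ 3 \<le> 4 * y" by simp
  moreover have "inverse (fact 3) * \<bar>y\<bar> ^ 3 = y ^ 3 / 6" using assms by (simp add: fact_numeral)
  ultimately have "inverse (fact 3) * \<bar>y\<bar> ^ 3 \<le> 4 * y / 6" by linarith
  then have "\<bar>sin y - y\<bar> \<le> 4 * y / 6" using b by linarith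
  then show ?thesis by linarith
qed

lemma norm_1_e:
  assumes r: "\<bar>r\<bar> \<le> 1 / 2" shows "norm (1 - e r) \<ge> \<bar>r\<bar>"
proof -
  have "(norm (1 - e r))\<^sup>2 = (1 - cos (2 * pi * r))\<^sup>2 + (sin (2 * pi * r))\<^sup>2"
    by (simp add: e_cis cmod_power2)
  also have "\<dots> = 2 - 2 * cos (2 * (pi * r))"
    using sin_cos_squared_add[of "2 * pi * r"] by (simp add: power2_eq_square algebra_simps)
  also have "\<dots> = 4 * (sin (pi * r))\<^sup>2" by (simp add: cos_double_sin)
  finally have eq: "(norm (1 - e r))\<^sup>2 = 4 * (sin (pi * r))\<^sup>2" .
  have "\<bar>sin (pi * r)\<bar> = sin (pi * \<bar>r\<bar>)"
    proof (cases "r \<ge> 0")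
    case True
    have "0 \<le> sin (pi * r)" using True r by (intro sin_ge_zero) auto
    then show ?thesis using True by simp
  next
    case False
    have a1: "0 \<le> pi * (- r)" using False by (intro mult_nonneg_nonneg) auto
    have a2: "pi * (- r) \<le> pi * 1" using False r by (intro mult_left_mono) auto
    have "0 \<le> sin (pi * (- r))" using a2 by (intro sin_ge_zero[OF a1]) simp
    then show ?thesis using False by simp
  qed
  also have "\<dots> \<ge> pi * \<bar>r\<bar> / 3"
  proof (rule sin_lower)
    show "0 \<le> pi * \<bar>r\<bar>" by simp
    have "pi * \<bar>r\<bar> \<le> 4 * (1 / 2)" using r pi_less_4 by (intro mult_mono) auto
    then show "pi * \<bar>r\<bar> \<le> 2" by simp
  qed
  finally have s1: "\<bar>sin (pi * r)\<bar> \<ge> pi * \<bar>r\<bar> / 3" .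
  have "2 * \<bar>r\<bar> \<le> pi * \<bar>r\<bar>" by (rule mult_right_mono[OF pi_ge_two]) simp
  then have "\<bar>sin (pi * r)\<bar> \<ge> \<bar>r\<bar> / 2" using s1 by linarith
  then have "(\<bar>r\<bar> / 2)\<^sup>2 \<le> (sin (pi * r))\<^sup>2"
    using power_mono[of "\<bar>r\<bar> / 2" "\<bar>sin (pi * r)\<bar>" 2] by simp
  moreover have "(\<bar>r\<bar> / 2)\<^sup>2 = \<bar>r\<bar>\<^sup>2 / 4" by (simp add: power_divide)
  ultimately have "\<bar>r\<bar>\<^sup>2 \<le> (norm (1 - e r))\<^sup>2" unfolding eq by linarith
  then show ?thesis by (rule power2_le_imp_le) simp
qed


lemma geo_bound:
  assumes N: "N \<ge> 1" and r0: "0 < \<bar>g - of_int t\<bar>" and r1: "\<bar>g - of_int t\<bar> \<le> 1 / 2"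
  shows "norm (SS (\<lambda>s. g * s + c) N) \<le> 2 / \<bar>g - of_int t\<bar>"
proof -
  define r where "r = g - of_int t"
  define w where "w = e g"
  have w: "w = e r" unfolding w_def r_def
    using e_add[of "g - of_int t" "of_int t"] e_int[of t] by simp
  have "SS (\<lambda>s. g * s + c) N = e c * (\<Sum>n\<in>{1..N}. w ^ n)"
    unfolding SS_def w_def e_pow sum_distrib_left
    by (rule sum.cong) (simp_all add: e_add mult.commute)
  then have n1: "norm (SS (\<lambda>s. g * s + c) N) = norm (\<Sum>n\<in>{1..N}. w ^ n)" by (simp add: norm_mult)
  have gp: "(1 - w) * (\<Sum>n\<in>{1..N}. w ^ n) = w ^ 1 - w ^ Suc N"
    using sum_gp_multiplied[OF N, of w] by simp
  have "norm (w ^ 1 - w ^ Suc N) \<le> 2"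
    using norm_triangle_ineq4[of "w ^ 1" "w ^ Suc N"] unfolding w by (simp add: norm_power norm_mult)
  then have "norm (1 - w) * norm (\<Sum>n\<in>{1..N}. w ^ n) \<le> 2"
    using gp by (simp only: norm_mult[symmetric])
  moreover have "norm (1 - w) \<ge> \<bar>r\<bar>" unfolding w using norm_1_e r1 r_def by simp
  moreover have "\<bar>r\<bar> > 0" using r0 r_def by simp
  ultimately have "\<bar>r\<bar> * norm (\<Sum>n\<in>{1..N}. w ^ n) \<le> 2"
    using mult_right_mono[of "\<bar>r\<bar>" "norm (1 - w)" "norm (\<Sum>n\<in>{1..N}. w ^ n)"] by simp
  then show ?thesis using n1 \<open>\<bar>r\<bar> > 0\<close> unfolding r_def by (simp add: le_divide_eq mult.commute)
qed

lemma tri_aux: "(A::real) - \<bar>Y\<bar> \<le> \<bar>X + Y\<bar>" if "\<bar>X\<bar> = A"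
proof -
  have "\<bar>X\<bar> \<le> \<bar>X + Y\<bar> + \<bar>Y\<bar>" using abs_triangle_ineq[of "X + Y" "- Y"] by simp
  then show ?thesis using that by linarith
qed

lemma dioph:
  fixes p q m :: int and a :: real
  assumes q: "q > 0" and cop: "gcd p q = 1" and app: "\<bar>a - of_int p / of_int q\<bar> \<le> 1 / (of_int q)^2"
    and m0: "0 < \<bar>m\<bar>" and mq: "2 * \<bar>m\<bar> \<le> q"
  shows "\<bar>of_int m * a - of_int (round (of_int m * a))\<bar> \<ge> 1 / (2 * of_int q)"
proof -
  define t where "t = round (of_int m * a)"
  have nd: "\<not> q dvd m * p"
  proof
    assume "q dvd m * p"
    moreover have "coprime q p" using cop by (simp add: coprime_iff_gcd_eq_1 gcd.commute)
    ultimately have "q dvd m" by (simp add: coprime_dvd_mult_left_iff)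
    then have "q \<le> \<bar>m\<bar>" using dvd_imp_le_int[of m q] m0 q by simp
    then show False using mq m0 by linarith
  qed
  have ne: "m * p - t * q \<noteq> 0"
  proof
    assume "m * p - t * q = 0"
    then have "m * p = q * t" by simp
    then have "q dvd m * p" by (rule dvdI)
    then show False using nd by blast
  qed
  then have "(1::int) \<le> \<bar>m * p - t * q\<bar>" by linarith
  then have "real_of_int 1 \<le> real_of_int \<bar>m * p - t * q\<bar>" by (simp only: of_int_le_iff)
  then have one: "1 \<le> \<bar>real_of_int (m * p - t * q)\<bar>" by simp
  have qr: "real_of_int q > 0" using q by simp
  have eqn: "of_int m * a - of_int t = (of_int (m * p - t * q)) / of_int q + of_int m * (a - of_int p / of_int q)"
    using qr by (simp add: field_simps)
  have ad: "\<bar>real_of_int (m * p - t * q) / of_int q\<bar> = \<bar>real_of_int (m * p - t * q)\<bar> / of_int q"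
    using qr by (simp add: abs_divide)
  have tri: "\<bar>X\<bar> \<le> \<bar>X + Y\<bar> + \<bar>Y\<bar>" for X Y :: real
    using abs_triangle_ineq[of "X + Y" "- Y"] by simp
  have "\<bar>of_int m * a - of_int t\<bar> \<ge> \<bar>real_of_int (m * p - t * q)\<bar> / of_int q - \<bar>of_int m * (a - of_int p / of_int q)\<bar>"
    unfolding eqn by (rule tri_aux[OF ad])
  moreover have "\<bar>real_of_int (m * p - t * q)\<bar> / of_int q \<ge> 1 / real_of_int q"
    using one qr by (simp add: divide_right_mono)
  moreover have "\<bar>real_of_int m * (a - of_int p / of_int q)\<bar> \<le> (of_int q / 2) * (1 / (of_int q)^2)"
  proof -
    have "\<bar>real_of_int m\<bar> \<le> of_int q / 2" using mq by linarith
    then show ?thesis unfolding abs_mult using app by (intro mult_mono) auto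
  qed
  moreover have "(of_int q / 2) * (1 / (of_int q)^2) = 1 / (2 * real_of_int q)"
    using qr by (simp add: power2_eq_square)
  moreover have "1 / real_of_int q - 1 / (2 * real_of_int q) = 1 / (2 * real_of_int q)"
    using qr by simp
  ultimately show ?thesis unfolding t_def by linarith
qed


lemma sum_int_nat:
  fixes N :: int assumes "N \<ge> 0"
  shows "(\<Sum>n\<in>{1..N}. g (real_of_int n)) = (\<Sum>n\<in>{1..nat N}. g (real n))"
proof -
  have "{1..N} = int ` {1..nat N}" using assms by (simp add: image_int_atLeastAtMost)
  then show ?thesis by (simp add: sum.reindex)
qed

lemma LP_poly:
  assumes "degree P = k"
  shows "LP k (h * coeff P k) (\<lambda>t. h * poly P t)"
  unfolding LP_def Low_def
proof (rule exI[of _ "\<lambda>j. h * coeff P j"], intro allI)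
  fix x
  have "poly P x = (\<Sum>i<Suc k. coeff P i * x ^ i)"
    using assms by (simp add: poly_altdef lessThan_Suc_atMost)
  then show "h * poly P x - h * coeff P k * x ^ k = (\<Sum>j<k. h * coeff P j * x ^ j)"
    by (simp add: sum_distrib_left algebra_simps)
qed

lemma geom_exp:
  assumes "k \<ge> 1"
  shows "(\<Sum>i\<in>{2..k}. 1 / 2 ^ (i - 2) :: real) = 2 - 1 / 2 powr (real k - 2)"
  using assms
proof (induction k rule: nat_induct_at_least)
  case base
  have "(2::real) powr (real 1 - 2) = 1 / 2" by (simp add: powr_minus)
  then show ?case by simp
next
  case (Suc k)
  have "(\<Sum>i\<in>{2..Suc k}. 1 / 2 ^ (i - 2) :: real) = (\<Sum>i\<in>{2..k}. 1 / 2 ^ (i - 2)) + 1 / 2 ^ (k - 1)"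
    using Suc.hyps by (simp add: numeral_2_eq_2)
  also have "(2::real) ^ (k - 1) = 2 powr (real k - 1)"
    using Suc.hyps powr_realpow[of 2 "k - 1"] by (simp add: of_nat_diff)
  finally have s1: "(\<Sum>i\<in>{2..Suc k}. 1 / 2 ^ (i - 2) :: real) = (\<Sum>i\<in>{2..k}. 1 / 2 ^ (i - 2)) + 1 / 2 powr (real k - 1)" .
  have s2: "(2::real) powr (real k - 2) = 2 powr (real k - 1) / 2"
    using powr_diff[of 2 "real k - 1" 1] by simp
  have s3: "(2::real) powr (real (Suc k) - 2) = 2 powr (real k - 1)"
    by (simp add: algebra_simps)
  have "2 powr (real k - 1) > (0::real)" by simp
  then show ?case unfolding s1 s3 Suc.IH s2 by (simp add: field_simps)
qed


lemma G_props:
  fixes R :: int and e :: real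
  assumes R: "R \<ge> 1" and e: "0 \<le> e" "e \<le> 1"
  defines "v \<equiv> real_of_int R powr e"
  shows "1 \<le> nat \<lfloor>v\<rfloor>" "real (nat \<lfloor>v\<rfloor>) \<le> v" "v \<le> real_of_int R"
    "1 / real (nat \<lfloor>v\<rfloor>) \<le> 2 * (1 / real_of_int R) powr e"
proof -
  have R1: "(1::real) \<le> real_of_int R" using R by simp
  have v1: "1 \<le> v" unfolding v_def using R1 e by (intro ge_one_powr_ge_zero) auto
  then show g1: "1 \<le> nat \<lfloor>v\<rfloor>" by (simp add: le_nat_iff)
  have fl: "real (nat \<lfloor>v\<rfloor>) = of_int \<lfloor>v\<rfloor>" using v1 by simp
  then show "real (nat \<lfloor>v\<rfloor>) \<le> v" by simp
  have "v \<le> real_of_int R powr 1" unfolding v_def using R1 e by (intro powr_mono) auto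
  then show "v \<le> real_of_int R" using R1 by (simp add: powr_one)
  have "of_int \<lfloor>v\<rfloor> > v - 1" by linarith
  moreover have "(1::real) \<le> of_int \<lfloor>v\<rfloor>" using v1 by simp
  ultimately have "v \<le> 2 * real (nat \<lfloor>v\<rfloor>)" using fl by linarith
  then have "1 / real (nat \<lfloor>v\<rfloor>) \<le> 2 / v" using v1 g1 by (simp add: field_simps)
  also have "2 / v = 2 * (1 / real_of_int R) powr e" unfolding v_def using R1
    by (simp add: powr_divide)
  finally show "1 / real (nat \<lfloor>v\<rfloor>) \<le> 2 * (1 / real_of_int R) powr e" .
qed


theorem proposition1:
  fixes k :: nat
  assumes "k \<ge> 1"
  shows "\<exists>C::real. \<forall>(P::real poly) (q::int) (R::int) (h::int) (p::int) (N::int).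
           degree P = k \<longrightarrow> q > 0 \<longrightarrow> R > 0 \<longrightarrow> h > 0 \<longrightarrow>
           gcd p q = 1 \<longrightarrow>
           \<bar>coeff P k - real_of_int p / real_of_int q\<bar> \<le> 1 / (real_of_int q)^2 \<longrightarrow>
           2 * real_of_int h * fact k * (real_of_int R) powr (2 - 1 / 2 powr (real k - 2)) \<le> real_of_int q \<longrightarrow>
           N \<ge> R \<longrightarrow>
           (1 / real_of_int N) * norm (\<Sum>n\<in>{1..N}. e (real_of_int h * poly P (real_of_int n)))
             \<le> C * (1 / real_of_int R + real_of_int q / real_of_int N) powr (1 / 2 ^ (k - 1))"
proof -
  have k1: "k \<ge> 1" by fact
  define C where "C = max 1 (Dc 4 k)"
  show ?thesis
  proof (rule exI[of _ C], intro allI impI)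
    fix P :: "real poly" and q R h p N :: int
    assume deg: "degree P = k" and q0: "q > 0" and R0: "R > 0" and h0: "h > 0" and cop: "gcd p q = 1"
      and app: "\<bar>coeff P k - real_of_int p / real_of_int q\<bar> \<le> 1 / (real_of_int q)^2"
      and cond: "2 * real_of_int h * fact k * (real_of_int R) powr (2 - 1 / 2 powr (real k - 2)) \<le> real_of_int q"
      and NR: "N \<ge> R"
    define Nn where "Nn = nat N"
    define f where "f = (\<lambda>t. real_of_int h * poly P t)"
    define ex where "ex = (1::real) / 2 ^ (k - 1)"
    define x where "x = 1 / real_of_int R + real_of_int q / real_of_int N"
    have N1: "Nn \<ge> 1" unfolding Nn_def using NR R0 by simp
    have NN: "real Nn = real_of_int N" unfolding Nn_def using NR R0 by simp
    have lhs: "(1 / real_of_int N) * norm (\<Sum>n\<in>{1..N}. e (real_of_int h * poly P (real_of_int n)))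
        = norm (SS f Nn) / real Nn"
      using sum_int_nat[of N "\<lambda>t. e (real_of_int h * poly P t)"] NR R0
      unfolding SS_def f_def Nn_def[symmetric] NN by simp
    have ex0: "0 \<le> ex" unfolding ex_def by simp
    have x0: "0 < x" unfolding x_def using R0 q0 NR by (intro add_pos_pos) auto
    have C1: "1 \<le> C" "Dc 4 k \<le> C" unfolding C_def by auto
    have "norm (SS f Nn) / real Nn \<le> C * x powr ex"
    proof (cases "x \<le> 1")
      case False
      have "norm (SS f Nn) / real Nn \<le> 1" using SS_le[of f Nn] N1 by simp
      also have "1 \<le> x powr ex" using False ex0 by (intro ge_one_powr_ge_zero) auto
      also have "x powr ex \<le> C * x powr ex" using C1 mult_right_mono[of 1 C "x powr ex"] by simp
      finally show ?thesis .
    next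
      case True
      define G where "G i = nat \<lfloor>real_of_int R powr (1 / 2 ^ (i - 2))\<rfloor>" for i
      have R1: "R \<ge> 1" using R0 by simp
      have ei: "0 \<le> (1::real) / 2 ^ (i - 2)" "(1::real) / 2 ^ (i - 2) \<le> 1" for i by auto
      note GP = G_props[OF R1 ei, folded G_def]
      have Rx: "1 / real_of_int R \<le> x" unfolding x_def using q0 NR R0 by simp
      have Gx: "1 / real (G i) \<le> 2 * x powr (1 / 2 ^ (i - 2))" for i
      proof -
        have "(1 / real_of_int R) powr (1 / 2 ^ (i - 2)) \<le> x powr (1 / 2 ^ (i - 2))"
          using Rx ei R0 by (intro powr_mono2) auto
        then show ?thesis using GP(4)[of i] by linarith
      qed
      have G1: "G i \<ge> 1" for i using GP(1) by simp
      have prod: "Mk G k \<le> fact k * real_of_int R powr (2 - 1 / 2 powr (real k - 2))"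
      proof -
        have "(\<Prod>i\<in>{2..k}. real (G i)) \<le> (\<Prod>i\<in>{2..k}. real_of_int R powr (1 / 2 ^ (i - 2)))"
          using GP(2) by (intro prod_mono) auto
        also have "\<dots> = real_of_int R powr (\<Sum>i\<in>{2..k}. 1 / 2 ^ (i - 2))"
          using R1 by (simp add: powr_sum)
        also have "\<dots> = real_of_int R powr (2 - 1 / 2 powr (real k - 2))"
          using geom_exp[OF k1] by simp
        finally show ?thesis unfolding Mk_def by (intro mult_left_mono) auto
      qed
      have Rq: "real_of_int R \<le> real_of_int q" if "k \<ge> 2"
      proof -
        have "1 \<le> (2::real) powr (real k - 2)" using that by (intro ge_one_powr_ge_zero) auto
        then have "1 / 2 powr (real k - 2) \<le> (1::real)" by simp
        then have "real_of_int R powr 1 \<le> real_of_int R powr (2 - 1 / 2 powr (real k - 2))"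
          using R1 by (intro powr_mono) auto
        then have a: "real_of_int R \<le> real_of_int R powr (2 - 1 / 2 powr (real k - 2))"
          using R1 by (simp add: powr_one)
        have hh: "1 \<le> real_of_int h" using h0 by simp
        have ff: "1 \<le> (fact k :: real)" by (rule fact_ge_1)
        have "1 * 1 \<le> real_of_int h * fact k" using hh ff by (intro mult_mono) auto
        then have "1 \<le> 2 * real_of_int h * fact k" by simp
        then have "real_of_int R powr (2 - 1 / 2 powr (real k - 2)) \<le>
            2 * real_of_int h * fact k * real_of_int R powr (2 - 1 / 2 powr (real k - 2))"
          by (intro mult_le_cancel_right1[THEN iffD2]) auto
        then show ?thesis using a cond by linarith
      qed
      have GN: "real (G i) \<le> x * real Nn" if "2 \<le> i" "i \<le> k" for i
      proof -
        have "real (G i) \<le> real_of_int R" using GP(2)[of i] GP(3)[of i] by linarith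
        also have "\<dots> \<le> real_of_int q" using Rq that by auto
        also have "\<dots> \<le> x * real Nn" unfolding x_def NN using NR R0
          by (simp add: distrib_right)
        finally show ?thesis .
      qed
      have Qb: "4 * real_of_int q / real Nn \<le> 4 * x"
        unfolding x_def NN using R0 by simp
      have good: "Good Nn (4 * real_of_int q) (real_of_int h * coeff P k) (Mk G k)"
        unfolding Good_def
      proof (intro allI impI)
        fix m :: int and c
        assume m: "0 < \<bar>m\<bar> \<and> real_of_int \<bar>m\<bar> \<le> Mk G k"
        define m' where "m' = m * h"
        have m'0: "0 < \<bar>m'\<bar>" unfolding m'_def using m h0 by (simp add: abs_mult)
        have "real_of_int (2 * \<bar>m'\<bar>) = 2 * real_of_int h * real_of_int \<bar>m\<bar>"
          unfolding m'_def using h0 by (simp add: abs_mult)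
        also have "\<dots> \<le> 2 * real_of_int h * Mk G k" using m h0 by (intro mult_left_mono) auto
        also have "\<dots> \<le> 2 * real_of_int h * (fact k * real_of_int R powr (2 - 1 / 2 powr (real k - 2)))"
          using prod h0 by (intro mult_left_mono) auto
        also have "\<dots> \<le> real_of_int q" using cond by (simp add: mult.assoc)
        finally have mq: "2 * \<bar>m'\<bar> \<le> q" by linarith
        define g where "g = real_of_int m' * coeff P k"
        define t where "t = round g"
        have d1: "\<bar>g - of_int t\<bar> \<ge> 1 / (2 * real_of_int q)"
          using dioph[OF q0 cop app m'0 mq] unfolding g_def t_def .
        have "0 < 1 / (2 * real_of_int q)" using q0 by simp
        then have d0: "0 < \<bar>g - of_int t\<bar>" using d1 by linarith
        have d2: "\<bar>g - of_int t\<bar> \<le> 1 / 2" using of_int_round_abs_le[of g] unfolding t_def by linarith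
        have "norm (SS (\<lambda>s. g * s + c) Nn) \<le> 2 / \<bar>g - of_int t\<bar>"
          by (rule geo_bound[OF N1 d0 d2])
        also have "\<dots> \<le> 2 / (1 / (2 * real_of_int q))"
          using d1 d0 q0 by (intro divide_left_mono) auto
        also have "\<dots> = 4 * real_of_int q" by simp
        finally have "norm (SS (\<lambda>s. g * s + c) Nn) \<le> 4 * real_of_int q" .
        moreover have "(\<lambda>t. real_of_int m * (real_of_int h * coeff P k) * t + c) = (\<lambda>s. g * s + c)"
          unfolding g_def m'_def by (simp add: mult.assoc mult.left_commute)
        ultimately show "norm (SS (\<lambda>t. real_of_int m * (real_of_int h * coeff P k) * t + c) Nn) \<le> 4 * real_of_int q"
          by simp
      qed
      have "norm (SS f Nn) / real Nn \<le> Dc 4 k * x powr (1 / 2 ^ (k - 1))"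
        using W[OF N1 x0 True _ Qb G1 GN Gx k1 order_refl LP_poly[OF deg, of "real_of_int h"] good]
        unfolding f_def by simp
      also have "\<dots> \<le> C * x powr ex" unfolding ex_def using C1 by (intro mult_right_mono) auto
      finally show ?thesis .
    qed
    then show "(1 / real_of_int N) * norm (\<Sum>n\<in>{1..N}. e (real_of_int h * poly P (real_of_int n)))
             \<le> C * (1 / real_of_int R + real_of_int q / real_of_int N) powr (1 / 2 ^ (k - 1))"
      unfolding lhs x_def ex_def .
  qed
qed

end
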